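(* Let $(X,\rho,\mu)$ be a $K$-doubling metric measure space, $(M,d)$ a complete metric space, $\mathcal D$ an approximate $X$-distribution for $M$, $A\subseteq X$ nonempty and $f\colon A\to M$ an arbitrary function that is approximately $\mathcal D$-differentiable at some $x\in A$. Then $x\in A_f^\mu$ and $\operatorname{Lip}^\mu f(x)\le|[F]|_{x,f(x)}$ for every approximate $\mathcal D$-differential $[F]\in\mathcal D_{x,f(x)}$ of $f$ at $x$. If in addition $A$ is a $\mu$-neighborhood of $x$, then the approximate $\mathcal D$-differential $df_x$ of $f$ at $x$ is unique and $\operatorname{Lip}^\mu f(x)=|df_x|_{x,f(x)}$.
   Context: A $K$-doubling metric measure space ($K>0$) is a triple $(X,\rho,\mu)$ where $(X,\rho)$ is a complete separable metric space and $\mu$ is a Borel-regular outer measure on $X$ with $0<\mu(B_{2r}(x))\le K\mu(B_r(x))<+\infty$ for all $x\in X$, $r>0$. A set $E\ni x$ is a $\mu$-neighborhood of $x$ if there is a Borel set $B\subseteq E$ with $\lim_{r\to0^+}\mu(B_r(x)\setminus B)/\mu(B_r(x))=0$; these sets define the $\mu$-topology on $X$. A point $x$ is a $\mu$-accumulation point of $A$ if $A\cap U\setminus\{x\}\ne\emptyset$ for every $\mu$-neighborhood $U$ of $x$; for such $x$ and $g\colon A\to\mathbb R$, $\mu\text{-}\lim_{y\in A,y\to x}g(y)=z$ means that for every $\varepsilon>0$ there is a $\mu$-neighborhood $U$ of $x$ with $|g(y)-z|<\varepsilon$ for all $y\in A\cap U\setminus\{x\}$, and $\mu\text{-}\limsup_{y\in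 A,y\to x}g(y)=\inf_U\sup_{y\in U\cap A\setminus\{x\}}g(y)$ (infimum over $\mu$-neighborhoods $U$ of $x$). For $x\in X$, $P\in M$, let $\mathcal C^\mu_{x,P}$ be the set of equivalence classes $[F]$ of Lipschitz maps $F\colon B\to M$ defined on a $\mu$-neighborhood $B$ of $x$ with $F(x)=P$, modulo $F\sim G\iff\mu\text{-}\lim_{y\to x}d(F(y),G(y))/\rho(y,x)=0$; set $|[F]|_{x,P}=\limsup_{y\to x}d(F(y),P)/\rho(y,x)$. An approximate $X$-distribution for $M$ is any subset $\mathcal D\subseteq\bigsqcup_{(x,P)}\mathcal C^\mu_{x,P}$, with $\mathcal D_{x,P}=\mathcal D\cap\mathcal C^\mu_{x,P}$. For $f\colon A\to M$ and a $\mu$-accumulation point $x\in A$ of $A$, $f$ is approximately $\mathcal D$-differentiable at $x$ if there is $[F]\in\mathcal D_{x,f(x)}$ with $\mu\text{-}\lim_{y\in A,y\to x}d(f(y),F(y))/\rho(y,x)=0$; such $[F]$ is an approximate $\mathcal D$-differential. Finally $\operatorname{Lip}^\mu f(x)=\mu\text{-}\limsup_{y\in A,y\to x}d(f(y),f(x))/\rho(y,x)$ and $A_f^\mu$ is the set of $\mu$-accumulation points $x\in A$ of $A$ with $\operatorname{Lip}^\mu f(x)<+\infty$. *)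

theory Defs
  imports "HOL-Analysis.Analysis"
begin

definition doubling_mms :: "real \<Rightarrow> ('a::metric_space) measure \<Rightarrow> bool" where
  "doubling_mms K \<mu> \<longleftrightarrow> K > 0 \<and> sets \<mu> = sets borel \<and>
     (\<forall>x r. r > 0 \<longrightarrow> 0 < emeasure \<mu> (ball x r)
        \<and> emeasure \<mu> (ball x (2*r)) \<le> ennreal K * emeasure \<mu> (ball x r)
        \<and> emeasure \<mu> (ball x r) < \<infinity>)"

definition mu_nbhd :: "('a::metric_space) measure \<Rightarrow> 'a \<Rightarrow> 'a set \<Rightarrow> bool" where
  "mu_nbhd \<mu> x E \<longleftrightarrow> x \<in> E \<and> (\<exists>B. B \<in> sets borel \<and> B \<subseteq> E \<and>
     ((\<lambda>r. measure \<mu> (ball x r - B) / measure \<mu> (ball x r)) \<longlongrightarrow> 0) (at_right 0))"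

definition mu_acc :: "('a::metric_space) measure \<Rightarrow> 'a set \<Rightarrow> 'a \<Rightarrow> bool" where
  "mu_acc \<mu> A x \<longleftrightarrow> (\<forall>U. mu_nbhd \<mu> x U \<longrightarrow> A \<inter> U - {x} \<noteq> {})"

definition mu_lim :: "('a::metric_space) measure \<Rightarrow> 'a set \<Rightarrow> ('a \<Rightarrow> real) \<Rightarrow> 'a \<Rightarrow> real \<Rightarrow> bool" where
  "mu_lim \<mu> A g x z \<longleftrightarrow> (\<forall>\<epsilon>>0. \<exists>U. mu_nbhd \<mu> x U \<and> (\<forall>y\<in>A \<inter> U - {x}. \<bar>g y - z\<bar> < \<epsilon>))"

definition mu_limsup :: "('a::metric_space) measure \<Rightarrow> 'a set \<Rightarrow> ('a \<Rightarrow> real) \<Rightarrow> 'a \<Rightarrow> ereal" where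
  "mu_limsup \<mu> A g x = (INF U\<in>{U. mu_nbhd \<mu> x U}. SUP y\<in>U \<inter> A - {x}. ereal (g y))"

text \<open>A germ representative: a pair (B, F) with F a Lipschitz map on the domain B
  (values of F outside B are irrelevant).\<close>
type_synonym ('a, 'b) germ_rep = "'a set \<times> ('a \<Rightarrow> 'b)"

definition lip_rep :: "('a::metric_space) measure \<Rightarrow> 'a \<Rightarrow> 'b::metric_space \<Rightarrow> ('a, 'b) germ_rep \<Rightarrow> bool" where
  "lip_rep \<mu> x P p \<longleftrightarrow> mu_nbhd \<mu> x (fst p) \<and> (\<exists>L. L-lipschitz_on (fst p) (snd p)) \<and> snd p x = P"

definition germ_equiv :: "('a::metric_space) measure \<Rightarrow> 'a \<Rightarrow> ('a, 'b::metric_space) germ_rep \<Rightarrow> ('a, 'b) germ_rep \<Rightarrow> bool" where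
  "germ_equiv \<mu> x p q \<longleftrightarrow>
     mu_lim \<mu> (fst p \<inter> fst q) (\<lambda>y. dist (snd p y) (snd q y) / dist y x) x 0"

definition germ_classes :: "('a::metric_space) measure \<Rightarrow> 'a \<Rightarrow> 'b::metric_space \<Rightarrow> ('a, 'b) germ_rep set set" where
  "germ_classes \<mu> x P = {c. \<exists>p. lip_rep \<mu> x P p \<and> c = {q. lip_rep \<mu> x P q \<and> germ_equiv \<mu> x p q}}"

definition rep_norm :: "'a::metric_space \<Rightarrow> 'b::metric_space \<Rightarrow> ('a, 'b) germ_rep \<Rightarrow> ereal" where
  "rep_norm x P p = Limsup (at x within fst p) (\<lambda>y. ereal (dist (snd p y) P / dist y x))"

definition germ_norm :: "'a::metric_space \<Rightarrow> 'b::metric_space \<Rightarrow> ('a, 'b) germ_rep set \<Rightarrow> ereal" where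
  "germ_norm x P c = rep_norm x P (SOME p. p \<in> c)"

definition approx_distribution :: "('a::metric_space) measure \<Rightarrow> ('a \<Rightarrow> 'b::metric_space \<Rightarrow> ('a, 'b) germ_rep set set) \<Rightarrow> bool" where
  "approx_distribution \<mu> D \<longleftrightarrow> (\<forall>x P. D x P \<subseteq> germ_classes \<mu> x P)"

definition approx_differential :: "('a::metric_space) measure \<Rightarrow> ('a \<Rightarrow> 'b::metric_space \<Rightarrow> ('a, 'b) germ_rep set set)
    \<Rightarrow> 'a set \<Rightarrow> ('a \<Rightarrow> 'b) \<Rightarrow> 'a \<Rightarrow> ('a, 'b) germ_rep set \<Rightarrow> bool" where
  "approx_differential \<mu> D A f x c \<longleftrightarrow> x \<in> A \<and> mu_acc \<mu> A x \<and> c \<in> D x (f x) \<and>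
     (\<exists>p\<in>c. mu_lim \<mu> (A \<inter> fst p) (\<lambda>y. dist (f y) (snd p y) / dist y x) x 0)"

definition approx_differentiable :: "('a::metric_space) measure \<Rightarrow> ('a \<Rightarrow> 'b::metric_space \<Rightarrow> ('a, 'b) germ_rep set set)
    \<Rightarrow> 'a set \<Rightarrow> ('a \<Rightarrow> 'b) \<Rightarrow> 'a \<Rightarrow> bool" where
  "approx_differentiable \<mu> D A f x \<longleftrightarrow> (\<exists>c. approx_differential \<mu> D A f x c)"

definition mu_Lip :: "('a::metric_space) measure \<Rightarrow> 'a set \<Rightarrow> ('a \<Rightarrow> 'b::metric_space) \<Rightarrow> 'a \<Rightarrow> ereal" where
  "mu_Lip \<mu> A f x = mu_limsup \<mu> A (\<lambda>y. dist (f y) (f x) / dist y x) x"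

definition A_f_mu :: "('a::metric_space) measure \<Rightarrow> 'a set \<Rightarrow> ('a \<Rightarrow> 'b::metric_space) \<Rightarrow> 'a set" where
  "A_f_mu \<mu> A f = {x\<in>A. mu_acc \<mu> A x \<and> mu_Lip \<mu> A f x < \<infinity>}"

end

theory Submission
  imports Defs
begin


lemma dm_sets: "doubling_mms K \<mu> \<Longrightarrow> S \<in> sets borel \<Longrightarrow> S \<in> sets \<mu>"
  by (simp add: doubling_mms_def)

lemma dm_ball_sets: "doubling_mms K \<mu> \<Longrightarrow> ball y r \<in> sets \<mu>"
  by (simp add: doubling_mms_def)

lemma dm_fin: "doubling_mms K \<mu> \<Longrightarrow> r > 0 \<Longrightarrow> emeasure \<mu> (ball y r) < \<infinity>"
  by (simp add: doubling_mms_def)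

lemma dm_fmeas: "doubling_mms K \<mu> \<Longrightarrow> r > 0 \<Longrightarrow> ball y r \<in> fmeasurable \<mu>"
  by (meson dm_ball_sets dm_fin fmeasurableI)

lemma dm_pos: "doubling_mms K \<mu> \<Longrightarrow> r > 0 \<Longrightarrow> 0 < measure \<mu> (ball y r)"
  unfolding measure_def doubling_mms_def by (simp add: enn2real_positive_iff)

lemma dm_Kpos: "doubling_mms K \<mu> \<Longrightarrow> K > 0"
  by (simp add: doubling_mms_def)

lemma dm_double: assumes "doubling_mms K \<mu>" "r > 0"
  shows "measure \<mu> (ball y (2*r)) \<le> K * measure \<mu> (ball y r)"
proof -
  have K: "K > 0" using assms dm_Kpos by blast
  have "emeasure \<mu> (ball y (2*r)) \<le> ennreal K * emeasure \<mu> (ball y r)"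
    using assms unfolding doubling_mms_def by blast
  moreover have "ennreal K * emeasure \<mu> (ball y r) < top"
    using dm_fin[OF assms] by (simp add: ennreal_mult_less_top)
  ultimately have "enn2real (emeasure \<mu> (ball y (2*r))) \<le> enn2real (ennreal K * emeasure \<mu> (ball y r))"
    by (rule enn2real_mono)
  then show ?thesis unfolding measure_def using K by (simp add: enn2real_mult)
qed

lemma dm_iter: assumes "doubling_mms K \<mu>" "t > 0"
  shows "measure \<mu> (ball y (2^k*t)) \<le> K^k * measure \<mu> (ball y t)"
proof (induction k)
  case 0 then show ?case by simp
next
  case (Suc k)
  have K: "K > 0" using assms dm_Kpos by blast
  have "measure \<mu> (ball y (2^Suc k*t)) = measure \<mu> (ball y (2*(2^k*t)))" by (simp add: mult.assoc)
  also have "\<dots> \<le> K * measure \<mu> (ball y (2^k*t))" using dm_double[OF assms(1), of "2^k*t" y] assms(2) by simp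
  also have "\<dots> \<le> K * (K^k * measure \<mu> (ball y t))" by (rule mult_left_mono) (use Suc K in auto)
  finally show ?case by (simp add: mult.assoc)
qed

lemma dm_mono: assumes "doubling_mms K \<mu>" "r > 0" "T \<subseteq> ball y r" "T \<in> sets borel" "S \<subseteq> T" "S \<in> sets borel"
  shows "measure \<mu> S \<le> measure \<mu> T"
proof -
  have "T \<in> fmeasurable \<mu>" using fmeasurableI2[OF dm_fmeas[OF assms(1,2)] assms(3)] dm_sets[OF assms(1,4)] .
  then show ?thesis by (rule measure_mono_fmeasurable[OF assms(5) dm_sets[OF assms(1,6)]])
qed

lemma nbhd_ball: assumes "d > 0" shows "mu_nbhd \<mu> x (ball x d)"
  unfolding mu_nbhd_def
proof (intro conjI exI)
  show "x \<in> ball x d" using assms by simp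
  show "ball x d \<in> sets borel" by simp
  show "ball x d \<subseteq> ball x d" by simp
  have "\<forall>\<^sub>F r in at_right 0. 0 = measure \<mu> (ball x r - ball x d) / measure \<mu> (ball x r)"
    unfolding eventually_at_right[OF assms]
  proof (intro exI[of _ d] conjI allI impI)
    fix r assume "0 < r" "r < d"
    then have "ball x r - ball x d = {}" by auto
    then have "measure \<mu> (ball x r - ball x d) = 0" by (simp only:) simp
    then show "0 = measure \<mu> (ball x r - ball x d) / measure \<mu> (ball x r)" by simp
  qed (use assms in auto)
  then show "((\<lambda>r. measure \<mu> (ball x r - ball x d) / measure \<mu> (ball x r)) \<longlongrightarrow> 0) (at_right 0)"
    by (rule Lim_transform_eventually[OF tendsto_const])
qed

lemma nbhd_Int: assumes dm: "doubling_mms K \<mu>" and U: "mu_nbhd \<mu> x U" and V: "mu_nbhd \<mu> x V"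
  shows "mu_nbhd \<mu> x (U \<inter> V)"
proof -
  obtain B1 where B1: "B1 \<in> sets borel" "B1 \<subseteq> U"
    "((\<lambda>r. measure \<mu> (ball x r - B1) / measure \<mu> (ball x r)) \<longlongrightarrow> 0) (at_right 0)"
    using U unfolding mu_nbhd_def by blast
  obtain B2 where B2: "B2 \<in> sets borel" "B2 \<subseteq> V"
    "((\<lambda>r. measure \<mu> (ball x r - B2) / measure \<mu> (ball x r)) \<longlongrightarrow> 0) (at_right 0)"
    using V unfolding mu_nbhd_def by blast
  have le: "measure \<mu> (ball x r - B1 \<inter> B2) / measure \<mu> (ball x r)
      \<le> measure \<mu> (ball x r - B1) / measure \<mu> (ball x r) + measure \<mu> (ball x r - B2) / measure \<mu> (ball x r)"
    for r
  proof -
    have e: "ball x r - B1 \<inter> B2 = (ball x r - B1) \<union> (ball x r - B2)" by blast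
    have "measure \<mu> (ball x r - B1 \<inter> B2) \<le> measure \<mu> (ball x r - B1) + measure \<mu> (ball x r - B2)"
    proof -
      have "ball x r - B1 \<in> sets borel" "ball x r - B2 \<in> sets borel"
        using B1(1) B2(1) by (intro sets.Diff; simp)+
      then have "ball x r - B1 \<in> sets \<mu>" "ball x r - B2 \<in> sets \<mu>"
        using dm_sets[OF dm] by blast+
      then show ?thesis unfolding e by (rule measure_Un_le)
    qed
    then show ?thesis by (simp add: add_divide_distrib[symmetric] divide_right_mono)
  qed
  have "((\<lambda>r. measure \<mu> (ball x r - B1 \<inter> B2) / measure \<mu> (ball x r)) \<longlongrightarrow> 0) (at_right 0)"
  proof (rule tendsto_sandwich[OF _ _ tendsto_const tendsto_add[OF B1(3) B2(3), simplified]])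
    show "\<forall>\<^sub>F r in at_right 0. 0 \<le> measure \<mu> (ball x r - B1 \<inter> B2) / measure \<mu> (ball x r)"
      by (intro always_eventually allI divide_nonneg_nonneg measure_nonneg)
    show "\<forall>\<^sub>F r in at_right 0. measure \<mu> (ball x r - B1 \<inter> B2) / measure \<mu> (ball x r)
      \<le> measure \<mu> (ball x r - B1) / measure \<mu> (ball x r) + measure \<mu> (ball x r - B2) / measure \<mu> (ball x r)"
      by (intro always_eventually allI le)
  qed
  then show ?thesis using U V B1 B2 unfolding mu_nbhd_def
  proof (intro conjI exI[of _ "B1 \<inter> B2"])
    show "x \<in> U \<inter> V" using U V unfolding mu_nbhd_def by blast
    show "B1 \<inter> B2 \<in> sets borel" using B1(1) B2(1) by blast
    show "B1 \<inter> B2 \<subseteq> U \<inter> V" using B1(2) B2(2) by blast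
  qed
qed

lemma mu_lim_tri:
  assumes dm: "doubling_mms K \<mu>"
    and h1: "mu_lim \<mu> S1 (\<lambda>y. dist (g1 y) (g2 y) / dist y x) x 0"
    and h2: "mu_lim \<mu> S2 (\<lambda>y. dist (g2 y) (g3 y) / dist y x) x 0"
    and V: "mu_nbhd \<mu> x V" and sub: "S3 \<inter> V \<subseteq> S1 \<inter> S2"
  shows "mu_lim \<mu> S3 (\<lambda>y. dist (g1 y) (g3 y) / dist y x) x 0"
  unfolding mu_lim_def
proof (intro allI impI)
  fix e :: real assume e: "e > 0"
  obtain U1 where U1: "mu_nbhd \<mu> x U1" "\<forall>y\<in>S1 \<inter> U1 - {x}. \<bar>dist (g1 y) (g2 y) / dist y x - 0\<bar> < e/2"
    using h1 e unfolding mu_lim_def by (meson half_gt_zero)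
  obtain U2 where U2: "mu_nbhd \<mu> x U2" "\<forall>y\<in>S2 \<inter> U2 - {x}. \<bar>dist (g2 y) (g3 y) / dist y x - 0\<bar> < e/2"
    using h2 e unfolding mu_lim_def by (meson half_gt_zero)
  show "\<exists>U. mu_nbhd \<mu> x U \<and> (\<forall>y\<in>S3 \<inter> U - {x}. \<bar>dist (g1 y) (g3 y) / dist y x - 0\<bar> < e)"
  proof (intro exI conjI ballI)
    show "mu_nbhd \<mu> x (U1 \<inter> U2 \<inter> V)" using nbhd_Int[OF dm] U1 U2 V by blast
    fix y assume y: "y \<in> S3 \<inter> (U1 \<inter> U2 \<inter> V) - {x}"
    then have y1: "y \<in> S1 \<inter> U1 - {x}" and y2: "y \<in> S2 \<inter> U2 - {x}" using sub by auto
    have d: "dist y x > 0" using y by auto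
    have a: "dist (g1 y) (g2 y) / dist y x < e/2" using U1(2) y1 by auto
    have b: "dist (g2 y) (g3 y) / dist y x < e/2" using U2(2) y2 by auto
    have "dist (g1 y) (g3 y) / dist y x \<le> dist (g1 y) (g2 y) / dist y x + dist (g2 y) (g3 y) / dist y x"
      using d by (simp add: add_divide_distrib[symmetric] divide_right_mono dist_triangle)
    then have "dist (g1 y) (g3 y) / dist y x < e" using a b by linarith
    then show "\<bar>dist (g1 y) (g3 y) / dist y x - 0\<bar> < e" by simp
  qed
qed

lemma germ_sym: "germ_equiv \<mu> x p q \<Longrightarrow> germ_equiv \<mu> x q p"
  unfolding germ_equiv_def by (simp add: dist_commute Int_commute)

lemma germ_trans: assumes dm: "doubling_mms K \<mu>" and q: "lip_rep \<mu> x P q"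
  and pq: "germ_equiv \<mu> x p q" and qr: "germ_equiv \<mu> x q r"
  shows "germ_equiv \<mu> x p r"
  using mu_lim_tri[OF dm pq[unfolded germ_equiv_def] qr[unfolded germ_equiv_def], of "fst q" "fst p \<inter> fst r"]
    q unfolding germ_equiv_def lip_rep_def by blast

lemma class_rep: assumes "c \<in> germ_classes \<mu> x P"
  obtains p0 where "lip_rep \<mu> x P p0" "c = {q. lip_rep \<mu> x P q \<and> germ_equiv \<mu> x p0 q}"
  using assms unfolding germ_classes_def by blast

lemma class_equiv: assumes dm: "doubling_mms K \<mu>" and c: "c \<in> germ_classes \<mu> x P"
  and p: "p \<in> c" and q: "q \<in> c" shows "germ_equiv \<mu> x p q"
proof -
  obtain p0 where p0: "lip_rep \<mu> x P p0" "c = {q. lip_rep \<mu> x P q \<and> germ_equiv \<mu> x p0 q}"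
    using c by (rule class_rep)
  have "germ_equiv \<mu> x p p0" using p p0 germ_sym by blast
  moreover have "germ_equiv \<mu> x p0 q" using q p0 by blast
  ultimately show ?thesis using germ_trans[OF dm p0(1)] by blast
qed

lemma diff_some:
  assumes dm: "doubling_mms K \<mu>" and AD: "approx_distribution \<mu> D"
    and c: "approx_differential \<mu> D A f x c"
  shows "(SOME p. p \<in> c) \<in> c \<and> lip_rep \<mu> x (f x) (SOME p. p \<in> c) \<and>
    mu_lim \<mu> (A \<inter> fst (SOME p. p \<in> c)) (\<lambda>y. dist (f y) (snd (SOME p. p \<in> c) y) / dist y x) x 0"
proof -
  define q where "q = (SOME p. p \<in> c)"
  obtain p where p: "p \<in> c" "mu_lim \<mu> (A \<inter> fst p) (\<lambda>y. dist (f y) (snd p y) / dist y x) x 0"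
    using c unfolding approx_differential_def by blast
  have cc: "c \<in> germ_classes \<mu> x (f x)" using c AD unfolding approx_differential_def approx_distribution_def by blast
  have q: "q \<in> c" unfolding q_def using p(1) by (rule someI)
  have lq: "lip_rep \<mu> x (f x) q" using q cc unfolding germ_classes_def by blast
  have lp: "lip_rep \<mu> x (f x) p" using p(1) cc unfolding germ_classes_def by blast
  have pq: "germ_equiv \<mu> x p q" using class_equiv[OF dm cc p(1) q] .
  have "mu_lim \<mu> (A \<inter> fst q) (\<lambda>y. dist (f y) (snd q y) / dist y x) x 0"
    using mu_lim_tri[OF dm p(2) pq[unfolded germ_equiv_def], of "fst p" "A \<inter> fst q"] lp
    unfolding lip_rep_def by blast
  then show ?thesis using q lq unfolding q_def by blast
qed

lemma rep_norm_fin: assumes "lip_rep \<mu> x P q" shows "rep_norm x P q \<le> ereal (SOME L. L-lipschitz_on (fst q) (snd q))"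
proof -
  define L where "L = (SOME L. L-lipschitz_on (fst q) (snd q))"
  have L: "L-lipschitz_on (fst q) (snd q)" unfolding L_def using assms unfolding lip_rep_def by (meson someI_ex)
  have x: "x \<in> fst q" "snd q x = P" using assms unfolding lip_rep_def mu_nbhd_def by auto
  have "\<forall>\<^sub>F y in at x within fst q. ereal (dist (snd q y) P / dist y x) \<le> ereal L"
    unfolding eventually_at_filter
  proof (intro always_eventually allI impI)
    fix y assume y: "y \<noteq> x" "y \<in> fst q"
    have "dist (snd q y) (snd q x) \<le> L * dist y x" using L y x unfolding lipschitz_on_def by blast
    then show "ereal (dist (snd q y) P / dist y x) \<le> ereal L" using y x
      by (simp add: pos_divide_le_eq)
  qed
  then show ?thesis unfolding rep_norm_def L_def by (rule Limsup_bounded)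
qed

lemma part_le:
  assumes dm: "doubling_mms K \<mu>" and lq: "lip_rep \<mu> x (f x) q"
    and fq: "mu_lim \<mu> (A \<inter> fst q) (\<lambda>y. dist (f y) (snd q y) / dist y x) x 0"
  shows "mu_Lip \<mu> A f x \<le> rep_norm x (f x) q"
proof -
  let ?L = "rep_norm x (f x) q"
  have qx: "snd q x = f x" and nq: "mu_nbhd \<mu> x (fst q)" using lq unfolding lip_rep_def by auto
  have main: "mu_Lip \<mu> A f x \<le> ereal z" if z: "?L < ereal z" for z
  proof -
    obtain z' where z': "?L < ereal z'" "ereal z' < ereal z" using ereal_dense2[OF z] by blast
    define e where "e = z - z'"
    have e: "e > 0" using z' unfolding e_def by simp
    have "\<forall>\<^sub>F y in at x within fst q. ereal (dist (snd q y) (f x) / dist y x) < ereal z'"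
      using Limsup_lessD[OF z'(1)[unfolded rep_norm_def]] by simp
    then obtain d where d: "d > 0" "\<forall>y\<in>fst q. y \<noteq> x \<and> dist y x < d \<longrightarrow> ereal (dist (snd q y) (f x) / dist y x) < ereal z'"
      unfolding eventually_at by blast
    obtain U1 where U1: "mu_nbhd \<mu> x U1" "\<forall>y\<in>A \<inter> fst q \<inter> U1 - {x}. \<bar>dist (f y) (snd q y) / dist y x - 0\<bar> < e"
      using fq e unfolding mu_lim_def by blast
    define U where "U = U1 \<inter> ball x d \<inter> fst q"
    have U: "mu_nbhd \<mu> x U" unfolding U_def using nbhd_Int[OF dm] U1(1) nbhd_ball[OF d(1)] nq by blast
    have S: "(SUP y\<in>U \<inter> A - {x}. ereal (dist (f y) (f x) / dist y x)) \<le> ereal z"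
    proof (rule SUP_least)
      fix y assume y: "y \<in> U \<inter> A - {x}"
      have dy: "dist y x > 0" using y by simp
      have a: "dist (f y) (snd q y) / dist y x < e" using U1(2) y unfolding U_def by auto
      have b: "dist (snd q y) (f x) / dist y x < z'" using d(2) y unfolding U_def by (auto simp: dist_commute)
      have "dist (f y) (f x) / dist y x \<le> dist (f y) (snd q y) / dist y x + dist (snd q y) (f x) / dist y x"
        using dy by (simp add: add_divide_distrib[symmetric] divide_right_mono dist_triangle)
      then show "ereal (dist (f y) (f x) / dist y x) \<le> ereal z" using a b unfolding e_def by simp
    qed
    have UC: "U \<in> Collect (mu_nbhd \<mu> x)" using U by simp
    show ?thesis unfolding mu_Lip_def mu_limsup_def
      by (rule order_trans[OF INF_lower[OF UC, of "\<lambda>U. SUP y\<in>U \<inter> A - {x}. ereal (dist (f y) (f x) / dist y x)"] S])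
  qed
  show ?thesis
  proof (rule ccontr)
    assume "\<not> ?thesis"
    then have "?L < mu_Lip \<mu> A f x" by simp
    then obtain z where "?L < ereal z" "ereal z < mu_Lip \<mu> A f x" using ereal_dense2 by blast
    then show False using main by fastforce
  qed
qed

lemma mu_Lip_nonneg: assumes "mu_acc \<mu> A x" shows "0 \<le> mu_Lip \<mu> A f x"
  unfolding mu_Lip_def mu_limsup_def
proof (rule INF_greatest)
  fix U assume "U \<in> Collect (mu_nbhd \<mu> x)"
  then obtain y where y: "y \<in> U \<inter> A - {x}" using assms unfolding mu_acc_def by blast
  have "(0::ereal) \<le> ereal (dist (f y) (f x) / dist y x)" by simp
  also have "\<dots> \<le> (SUP y\<in>U \<inter> A - {x}. ereal (dist (f y) (f x) / dist y x))"
    using y by (rule SUP_upper)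
  finally show "0 \<le> (SUP y\<in>U \<inter> A - {x}. ereal (dist (f y) (f x) / dist y x))" .
qed

lemma key:
  assumes dm: "doubling_mms K \<mu>" and lq: "lip_rep \<mu> x (f x) q"
    and fq: "mu_lim \<mu> (A \<inter> fst q) (\<lambda>y. dist (f y) (snd q y) / dist y x) x 0"
    and Lq: "Lq-lipschitz_on (fst q) (snd q)"
    and M: "mu_Lip \<mu> A f x < ereal M" "M > 0"
    and e: "0 < e" "e \<le> 1/2"
    and An: "mu_nbhd \<mu> x A"
  shows "\<exists>r0>0. \<forall>y\<in>fst q. y \<noteq> x \<and> dist y x < r0 \<longrightarrow>
           dist (snd q y) (f x) \<le> (Lq*e + (M+e)*(1+e)) * dist y x"
proof -
  have qx: "snd q x = f x" and nq: "mu_nbhd \<mu> x (fst q)" using lq unfolding lip_rep_def by auto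
  have Lq0: "Lq \<ge> 0" using Lq unfolding lipschitz_on_def by simp
  obtain U where U: "mu_nbhd \<mu> x U"
     "(SUP y\<in>U \<inter> A - {x}. ereal (dist (f y) (f x) / dist y x)) < ereal M"
    using M(1) unfolding mu_Lip_def mu_limsup_def INF_less_iff by auto
  have fU: "dist (f z) (f x) / dist z x < M" if "z \<in> U \<inter> A - {x}" for z
    using SUP_lessD[OF U(2) that] by simp
  obtain U2 where U2: "mu_nbhd \<mu> x U2" "\<forall>y\<in>A \<inter> fst q \<inter> U2 - {x}. \<bar>dist (f y) (snd q y) / dist y x - 0\<bar> < e"
    using fq e unfolding mu_lim_def by blast
  define W0 where "W0 = U \<inter> A \<inter> fst q \<inter> U2"
  have "mu_nbhd \<mu> x W0" unfolding W0_def using nbhd_Int[OF dm] U(1) U2(1) An nq by blast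
  then obtain W where W: "W \<in> sets borel" "W \<subseteq> W0"
    "((\<lambda>r. measure \<mu> (ball x r - W) / measure \<mu> (ball x r)) \<longlongrightarrow> 0) (at_right 0)"
    unfolding mu_nbhd_def by blast
  have K: "K > 0" using dm by (rule dm_Kpos)
  obtain k where k: "3/e < 2^k" using real_arch_pow[of "2::real" "3/e"] by auto
  have Kk: "K^k > 0" using K by simp
  have "\<forall>\<^sub>F r in at_right 0. measure \<mu> (ball x r - W) / measure \<mu> (ball x r) < 1 / K^k"
    using order_tendstoD(2)[OF W(3)] Kk by simp
  then obtain b where b: "b > 0" "\<forall>s>0. s < b \<longrightarrow> measure \<mu> (ball x s - W) / measure \<mu> (ball x s) < 1 / K^k"
    unfolding eventually_at_right[OF zero_less_one] by blast
  show ?thesis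
  proof (intro exI[of _ "b/2"] conjI ballI impI)
    show "b/2 > 0" using b by simp
    fix y assume y: "y \<in> fst q" "y \<noteq> x \<and> dist y x < b/2"
    define r where "r = dist y x"
    have r: "r > 0" "2*r < b" using y unfolding r_def by auto
    define t where "t = e*r"
    have t: "t > 0" "t < r" using e r unfolding t_def by auto
    have k3: "3 < 2^k * e" using k e by (simp add: divide_less_eq)
    have "measure \<mu> (ball x (2*r) - W) / measure \<mu> (ball x (2*r)) < 1 / K^k" using b r by simp
    moreover have pos: "measure \<mu> (ball x (2*r)) > 0" using dm_pos[OF dm] r by simp
    ultimately have m1: "measure \<mu> (ball x (2*r) - W) < measure \<mu> (ball x (2*r)) / K^k"
      by (simp add: divide_less_eq pos_less_divide_eq Kk mult.commute)
    have sub1: "ball x (2*r) \<subseteq> ball y (2^k*t)"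
    proof
      fix z assume "z \<in> ball x (2*r)"
      then have "dist x z < 2*r" by simp
      moreover have "dist y z \<le> dist y x + dist x z" by (rule dist_triangle)
      moreover have "3 * r < 2^k * t" using k3 r unfolding t_def by (simp add: mult.assoc[symmetric])
      ultimately show "z \<in> ball y (2^k*t)" unfolding r_def by simp
    qed
    have tk: "2^k*t > 0" using t by simp
    have m2: "measure \<mu> (ball x (2*r)) \<le> measure \<mu> (ball y (2^k*t))"
      by (rule dm_mono[OF dm tk order.refl _ sub1]) auto
    have m3: "measure \<mu> (ball y (2^k*t)) \<le> K^k * measure \<mu> (ball y t)"
      by (rule dm_iter[OF dm t(1)])
    have m23: "measure \<mu> (ball x (2*r)) / K^k \<le> measure \<mu> (ball y t)"
      using m2 m3 Kk by (simp add: divide_le_eq mult.commute)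
    have sub2: "ball y t - W \<subseteq> ball x (2*r) - W"
    proof
      fix z assume "z \<in> ball y t - W"
      then have "dist y z < t" "z \<notin> W" by auto
      moreover have "dist x z \<le> dist x y + dist y z" by (rule dist_triangle)
      ultimately show "z \<in> ball x (2*r) - W" using t unfolding r_def by (simp add: dist_commute)
    qed
    have r2: "2*r > 0" using r by simp
    have m4: "measure \<mu> (ball y t - W) \<le> measure \<mu> (ball x (2*r) - W)"
      by (rule dm_mono[OF dm r2 _ _ sub2]) (use W(1) in auto)
    have "measure \<mu> (ball y t - W) < measure \<mu> (ball y t)" using m1 m23 m4 by linarith
    then have "ball y t - W \<noteq> ball y t" by auto
    then obtain z where z: "z \<in> ball y t" "z \<in> W" by blast
    have zW: "z \<in> U \<inter> A - {x}" "z \<in> A \<inter> fst q \<inter> U2 - {x}" "z \<in> fst q"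
      using z W(2) t r unfolding W0_def r_def by (auto simp: dist_commute)
    have dyz: "dist y z < t" using z by simp
    have dzx: "dist z x \<le> (1+e)*r"
    proof -
      have "dist z x \<le> dist z y + dist y x" by (rule dist_triangle)
      then show ?thesis using dyz unfolding t_def r_def by (simp add: dist_commute algebra_simps)
    qed
    have dzx0: "dist z x > 0" using zW by simp
    have f1: "dist (f z) (f x) < M * dist z x" using fU[OF zW(1)] dzx0 by (simp add: pos_divide_less_eq)
    have f2: "dist (f z) (snd q z) < e * dist z x" using U2(2) zW(2) dzx0 by (simp add: pos_divide_less_eq)
    have f3: "dist (snd q y) (snd q z) \<le> Lq * (e*r)"
    proof -
      have "dist (snd q y) (snd q z) \<le> Lq * dist y z" using Lq y(1) zW(3) unfolding lipschitz_on_def by blast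
      also have "\<dots> \<le> Lq * (e*r)" using dyz Lq0 unfolding t_def by (simp add: mult_left_mono)
      finally show ?thesis .
    qed
    have tr1: "dist (snd q y) (f x) \<le> dist (snd q y) (snd q z) + dist (snd q z) (f x)" by (rule dist_triangle)
    have tr2: "dist (snd q z) (f x) \<le> dist (snd q z) (f z) + dist (f z) (f x)" by (rule dist_triangle)
    have "dist (snd q y) (f x) \<le> dist (snd q y) (snd q z) + dist (snd q z) (f z) + dist (f z) (f x)"
      using tr1 tr2 by linarith
    also have "\<dots> \<le> Lq * (e*r) + (e + M) * dist z x" using f1 f2 f3 by (simp add: dist_commute algebra_simps)
    also have "\<dots> \<le> Lq * (e*r) + (e + M) * ((1+e)*r)"
      using dzx M(2) e by (intro add_left_mono mult_left_mono) auto
    also have "\<dots> = (Lq*e + (M+e)*(1+e)) * dist y x" unfolding r_def by (simp add: algebra_simps)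
    finally show "dist (snd q y) (f x) \<le> (Lq*e + (M+e)*(1+e)) * dist y x" .
  qed
qed

lemma part_ge:
  assumes dm: "doubling_mms K \<mu>" and lq: "lip_rep \<mu> x (f x) q"
    and fq: "mu_lim \<mu> (A \<inter> fst q) (\<lambda>y. dist (f y) (snd q y) / dist y x) x 0"
    and acc: "mu_acc \<mu> A x" and An: "mu_nbhd \<mu> x A"
  shows "rep_norm x (f x) q \<le> mu_Lip \<mu> A f x"
proof -
  obtain Lq where Lq: "Lq-lipschitz_on (fst q) (snd q)" using lq unfolding lip_rep_def by blast
  have Lq0: "Lq \<ge> 0" using Lq unfolding lipschitz_on_def by simp
  have nn: "0 \<le> mu_Lip \<mu> A f x" using acc by (rule mu_Lip_nonneg)
  show ?thesis unfolding rep_norm_def Limsup_le_iff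
  proof (intro allI impI)
    fix w assume w: "mu_Lip \<mu> A f x < w"
    show "\<forall>\<^sub>F y in at x within fst q. ereal (dist (snd q y) (f x) / dist y x) < w"
    proof (cases w)
      case PInf then show ?thesis by simp
    next
      case MInf then show ?thesis using w by simp
    next
      case (real wr)
      obtain M where M: "mu_Lip \<mu> A f x < ereal M" "ereal M < ereal wr" using ereal_dense2 w real by blast
      have M0: "M > 0" using order.strict_trans1[OF nn M(1)] by simp
      have Mw: "M < wr" using M(2) by simp
      define e where "e = min (1/2) ((wr - M) / (2*(Lq+M+5)))"
      have den: "2*(Lq+M+5) > 0" using Lq0 M0 by simp
      have e1: "0 < e" unfolding e_def using Mw den by simp
      have e1': "e \<le> 1/2" unfolding e_def by (rule min.cobounded1)
      note e = e1 e1'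
      have "e \<le> (wr - M) / (2*(Lq+M+5))" unfolding e_def by (rule min.cobounded2)
      then have "e * (2*(Lq+M+5)) \<le> (wr - M) / (2*(Lq+M+5)) * (2*(Lq+M+5))"
        using den by (intro mult_right_mono) auto
      then have e2: "e * (2*(Lq+M+5)) \<le> wr - M" using den by simp
      obtain r0 where r0: "r0 > 0" "\<forall>y\<in>fst q. y \<noteq> x \<and> dist y x < r0 \<longrightarrow>
           dist (snd q y) (f x) \<le> (Lq*e + (M+e)*(1+e)) * dist y x"
        using key[OF dm lq fq Lq M(1) M0 e An] by blast
      have bnd: "Lq*e + (M+e)*(1+e) < wr"
      proof -
        have "Lq*e + (M+e)*(1+e) = M + e*(Lq + 1 + M + e)" by (simp add: algebra_simps)
        also have "\<dots> \<le> M + e*(Lq+M+5)" using e by (intro add_left_mono mult_left_mono) auto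
        also have "\<dots> < wr"
        proof -
          have p: "e*(Lq+M+5) > 0" using e(1) Lq0 M0 by simp
          have "e * (2*(Lq+M+5)) = 2*(e*(Lq+M+5))" by simp
          then show ?thesis using e2 p by linarith
        qed
        finally show ?thesis .
      qed
      show ?thesis unfolding real eventually_at
      proof (intro exI[of _ r0] conjI ballI impI)
        show "r0 > 0" by (rule r0(1))
        fix y assume y: "y \<in> fst q" "y \<noteq> x \<and> dist y x < r0"
        have dy: "dist y x > 0" using y by simp
        have "dist (snd q y) (f x) \<le> (Lq*e + (M+e)*(1+e)) * dist y x" using r0(2) y by blast
        then have "dist (snd q y) (f x) / dist y x \<le> Lq*e + (M+e)*(1+e)" using dy by (simp add: pos_divide_le_eq)
        then show "ereal (dist (snd q y) (f x) / dist y x) < ereal wr" using bnd by simp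
      qed
    qed
  qed
qed

lemma uniq:
  assumes dm: "doubling_mms K \<mu>" and AD: "approx_distribution \<mu> D" and An: "mu_nbhd \<mu> x A"
    and c1: "approx_differential \<mu> D A f x c1" and c2: "approx_differential \<mu> D A f x c2"
  shows "c1 = c2"
proof -
  define q1 where "q1 = (SOME p. p \<in> c1)"
  define q2 where "q2 = (SOME p. p \<in> c2)"
  have Q1: "q1 \<in> c1" "lip_rep \<mu> x (f x) q1" "mu_lim \<mu> (A \<inter> fst q1) (\<lambda>y. dist (f y) (snd q1 y) / dist y x) x 0"
    using diff_some[OF dm AD c1] unfolding q1_def by blast+
  have Q2: "q2 \<in> c2" "lip_rep \<mu> x (f x) q2" "mu_lim \<mu> (A \<inter> fst q2) (\<lambda>y. dist (f y) (snd q2 y) / dist y x) x 0"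
    using diff_some[OF dm AD c2] unfolding q2_def by blast+
  have h1: "mu_lim \<mu> (A \<inter> fst q1) (\<lambda>y. dist (snd q1 y) (f y) / dist y x) x 0"
    using Q1(3) by (simp add: dist_commute)
  have q12: "germ_equiv \<mu> x q1 q2" unfolding germ_equiv_def
    by (rule mu_lim_tri[OF dm h1 Q2(3) An]) blast
  have cc1: "c1 \<in> germ_classes \<mu> x (f x)" using c1 AD unfolding approx_differential_def approx_distribution_def by blast
  have cc2: "c2 \<in> germ_classes \<mu> x (f x)" using c2 AD unfolding approx_differential_def approx_distribution_def by blast
  obtain p1 where p1: "lip_rep \<mu> x (f x) p1" "c1 = {q. lip_rep \<mu> x (f x) q \<and> germ_equiv \<mu> x p1 q}"
    using cc1 by (rule class_rep)
  obtain p2 where p2: "lip_rep \<mu> x (f x) p2" "c2 = {q. lip_rep \<mu> x (f x) q \<and> germ_equiv \<mu> x p2 q}"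
    using cc2 by (rule class_rep)
  have "germ_equiv \<mu> x p1 q1" using Q1(1) p1(2) by blast
  moreover have "germ_equiv \<mu> x q2 p2" using Q2(1) p2(2) germ_sym by blast
  ultimately have p12: "germ_equiv \<mu> x p1 p2"
    using germ_trans[OF dm Q1(2)] germ_trans[OF dm Q2(2)] q12 by blast
  have p21: "germ_equiv \<mu> x p2 p1" using p12 by (rule germ_sym)
  have "germ_equiv \<mu> x p1 q \<longleftrightarrow> germ_equiv \<mu> x p2 q" for q
    using germ_trans[OF dm p1(1) p21] germ_trans[OF dm p2(1) p12] by blast
  then show ?thesis using p1(2) p2(2) by blast
qed


theorem proposition2p6:
  fixes K :: real
    and \<mu> :: "'a::polish_space measure"
    and D :: "'a \<Rightarrow> 'b::complete_space \<Rightarrow> ('a, 'b) germ_rep set set"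
    and A :: "'a set" and f :: "'a \<Rightarrow> 'b" and x :: 'a
  assumes "doubling_mms K \<mu>"
    and "approx_distribution \<mu> D"
    and "A \<noteq> {}"
    and "x \<in> A"
    and "approx_differentiable \<mu> D A f x"
  shows "x \<in> A_f_mu \<mu> A f
    \<and> (\<forall>c. approx_differential \<mu> D A f x c \<longrightarrow> mu_Lip \<mu> A f x \<le> germ_norm x (f x) c)
    \<and> (mu_nbhd \<mu> x A \<longrightarrow>
         (\<exists>!c. approx_differential \<mu> D A f x c)
         \<and> (\<forall>c. approx_differential \<mu> D A f x c \<longrightarrow> mu_Lip \<mu> A f x = germ_norm x (f x) c))"
proof -
  note dm = assms(1) and AD = assms(2)
  obtain c0 where c0: "approx_differential \<mu> D A f x c0"
    using assms(5) unfolding approx_differentiable_def by blast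
  have LE: "mu_Lip \<mu> A f x \<le> germ_norm x (f x) c" if c: "approx_differential \<mu> D A f x c" for c
  proof -
    have Q: "lip_rep \<mu> x (f x) (SOME p. p \<in> c)"
      "mu_lim \<mu> (A \<inter> fst (SOME p. p \<in> c)) (\<lambda>y. dist (f y) (snd (SOME p. p \<in> c) y) / dist y x) x 0"
      using diff_some[OF dm AD c] by blast+
    show ?thesis unfolding germ_norm_def by (rule part_le[OF dm Q])
  qed
  have acc: "mu_acc \<mu> A x" using c0 unfolding approx_differential_def by blast
  have P1: "x \<in> A_f_mu \<mu> A f"
  proof -
    have Q: "lip_rep \<mu> x (f x) (SOME p. p \<in> c0)" using diff_some[OF dm AD c0] by blast
    have "mu_Lip \<mu> A f x \<le> ereal (SOME L. L-lipschitz_on (fst (SOME p. p \<in> c0)) (snd (SOME p. p \<in> c0)))"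
      using LE[OF c0] rep_norm_fin[OF Q] unfolding germ_norm_def by (rule order_trans)
    then have "mu_Lip \<mu> A f x < \<infinity>" using order.strict_trans1 by fastforce
    then show ?thesis unfolding A_f_mu_def using assms(4) acc by blast
  qed
  have P3: "(\<exists>!c. approx_differential \<mu> D A f x c)
         \<and> (\<forall>c. approx_differential \<mu> D A f x c \<longrightarrow> mu_Lip \<mu> A f x = germ_norm x (f x) c)"
    if An: "mu_nbhd \<mu> x A"
  proof (intro conjI allI impI)
    show "\<exists>!c. approx_differential \<mu> D A f x c"
      using c0 uniq[OF dm AD An] by blast
    fix c assume c: "approx_differential \<mu> D A f x c"
    have Q: "lip_rep \<mu> x (f x) (SOME p. p \<in> c)"
      "mu_lim \<mu> (A \<inter> fst (SOME p. p \<in> c)) (\<lambda>y. dist (f y) (snd (SOME p. p \<in> c) y) / dist y x) x 0"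
      using diff_some[OF dm AD c] by blast+
    have "germ_norm x (f x) c \<le> mu_Lip \<mu> A f x"
      unfolding germ_norm_def by (rule part_ge[OF dm Q acc An])
    then show "mu_Lip \<mu> A f x = germ_norm x (f x) c" using LE[OF c] by (rule antisym[rotated])
  qed
  show ?thesis using P1 LE P3 by blast
qed

end
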